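(* Consider the ergodic Markov process described in the context. The dimension of the (complex) vector space of absolutely convergent solutions $q:W\to\mathbb C$ of the inner equations is at most $2^cK$.
   Context: Fix integers $c\ge 1$ and $K\ge 1$. Consider an irreducible continuous-time Markov process on the state space $V\cup W$, where $V$ is a finite set and $W=\{\mathbf n=(n_0,n_1,\dots,n_c): n_0\in\{0,1,2,\dots\},\ n_i\in\{0,1\},\ i=1,\dots,c\}$. For each $i\in\{1,\dots,c\}$ and each integer $k\le K$ there are nonnegative rates $a_{k,i},b_{k,i},c_{k,i},d_{k,i}$. From a state $\mathbf n\in W$, for each $i$ and each $k\in\{-n_0,\dots,K\}$, the process jumps (changing only coordinates $0$ and $i$) from $(n_0,n_i)=(n_0,0)$ to $(n_0+k,1)$ at rate $a_{k,i}$ and to $(n_0+k,0)$ at rate $b_{k,i}$, and from $(n_0,n_i)=(n_0,1)$ to $(n_0+k,1)$ at rate $c_{k,i}$ and to $(n_0+k,0)$ at rate $d_{k,i}$; moreover from $\mathbf n$ it jumps into $V$ with total rate $\sum_{i=1}^c\sum_{k\le -n_0-1}\bigl((1-n_i)(a_{k,i}+b_{k,i})+n_i(c_{k,i}+d_{k,i})\bigr)$. There are no other transitions out of $W$. From states in $V$ no transitions are possible to states $\mathbf n\in W$ with $n_0\ge K$. All total outgoing rates are finite. The process is assumed ergodic. Let $e_i$ be the vector of length $c+1$ (indexed $0,\dots,c$) with a $1$ in position $i$ and zeros elsewhere. The inner equations are, for a function $q:W\to\mathbb C$ and all $\mathbf n\in W$ with $n_0\ge K$: \[\sum_{i=1}^c\sum_{k=-\infty}^K\bigl((1-n_i)(a_{k,i}+b_{k,i})+n_i(c_{k,i}+d_{k,i})\bigr)q(\mathbf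 n)=\sum_{i=1}^c\sum_{k=-\infty}^K\Bigl((1-n_i)\bigl(b_{k,i}q(\mathbf n-ke_0)+d_{k,i}q(\mathbf n-ke_0+e_i)\bigr)+n_i\bigl(a_{k,i}q(\mathbf n-ke_0-e_i)+c_{k,i}q(\mathbf n-ke_0)\bigr)\Bigr).\] A solution $q$ is called absolutely convergent if $\sum_{\mathbf n\in W}|q(\mathbf n)|<\infty$. *)

theory Defs
  imports "HOL-Analysis.Analysis" "HOL-Library.Function_Algebras"
begin

text \<open>A state of W is encoded as a function n :: nat => nat, where n 0 is the
  level n_0 and n i (1 <= i <= c) is the binary coordinate n_i; all other
  coordinates are 0.\<close>

definition Wset :: "nat \<Rightarrow> (nat \<Rightarrow> nat) set" where
  "Wset c = {n. (\<forall>i\<in>{1..c}. n i \<le> 1) \<and> (\<forall>i>c. n i = 0)}"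

text \<open>Replace the level n_0 by n_0 + k (k integer; the caller ensures n_0 + k >= 0).\<close>
definition shift0 :: "(nat \<Rightarrow> nat) \<Rightarrow> int \<Rightarrow> (nat \<Rightarrow> nat)" where
  "shift0 n k = n(0 := nat (int (n 0) + k))"

definition jump_rate ::
  "(int \<Rightarrow> nat \<Rightarrow> real) \<Rightarrow> (int \<Rightarrow> nat \<Rightarrow> real) \<Rightarrow> (int \<Rightarrow> nat \<Rightarrow> real) \<Rightarrow> (int \<Rightarrow> nat \<Rightarrow> real)
   \<Rightarrow> (nat \<Rightarrow> nat) \<Rightarrow> nat \<Rightarrow> int \<Rightarrow> nat \<Rightarrow> real" where
  "jump_rate a b cc d n i k j =
     (if n i = 0 then (if j = 1 then a k i else b k i)
      else (if j = 1 then cc k i else d k i))"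

text \<open>Continuous-time Markov chain with off-diagonal rates Q on the state space S:
  irreducible, and ergodic (positive recurrent), the latter expressed by the
  existence of a stationary probability distribution pi (global balance equations).
  (All chains considered here are non-explosive, since their rates are bounded.)\<close>
definition irreducible_ctmc :: "'s set \<Rightarrow> ('s \<Rightarrow> 's \<Rightarrow> real) \<Rightarrow> bool" where
  "irreducible_ctmc S Q \<longleftrightarrow>
     (\<forall>x\<in>S. \<forall>y\<in>S. (x, y) \<in> {(u, v). u \<in> S \<and> v \<in> S \<and> u \<noteq> v \<and> Q u v > 0}\<^sup>*)"

definition ergodic_ctmc :: "'s set \<Rightarrow> ('s \<Rightarrow> 's \<Rightarrow> real) \<Rightarrow> bool" where
  "ergodic_ctmc S Q \<longleftrightarrow> irreducible_ctmc S Q \<and>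
     (\<exists>\<pi>. (\<forall>x\<in>S. \<pi> x \<ge> 0) \<and> (\<pi> has_sum 1) S \<and>
        (\<forall>y\<in>S. (\<Sum>\<^sub>\<infinity>x\<in>S - {y}. \<pi> x * Q x y) = \<pi> y * (\<Sum>\<^sub>\<infinity>z\<in>S - {y}. Q y z)))"

definition inner_eq ::
  "nat \<Rightarrow> int \<Rightarrow> (int \<Rightarrow> nat \<Rightarrow> real) \<Rightarrow> (int \<Rightarrow> nat \<Rightarrow> real) \<Rightarrow> (int \<Rightarrow> nat \<Rightarrow> real) \<Rightarrow> (int \<Rightarrow> nat \<Rightarrow> real)
   \<Rightarrow> ((nat \<Rightarrow> nat) \<Rightarrow> complex) \<Rightarrow> (nat \<Rightarrow> nat) \<Rightarrow> bool" where
  "inner_eq c K a b cc d q n \<longleftrightarrow>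
     (\<Sum>i=1..c. \<Sum>\<^sub>\<infinity>k\<in>{..K}.
        complex_of_real ((1 - real (n i)) * (a k i + b k i) + real (n i) * (cc k i + d k i)) * q n)
   = (\<Sum>i=1..c. \<Sum>\<^sub>\<infinity>k\<in>{..K}.
        complex_of_real (1 - real (n i)) *
          (complex_of_real (b k i) * q (shift0 n (-k)) + complex_of_real (d k i) * q ((shift0 n (-k))(i := 1)))
      + complex_of_real (real (n i)) *
          (complex_of_real (a k i) * q ((shift0 n (-k))(i := 0)) + complex_of_real (cc k i) * q (shift0 n (-k))))"

definition abs_conv_solutions ::
  "nat \<Rightarrow> int \<Rightarrow> (int \<Rightarrow> nat \<Rightarrow> real) \<Rightarrow> (int \<Rightarrow> nat \<Rightarrow> real) \<Rightarrow> (int \<Rightarrow> nat \<Rightarrow> real) \<Rightarrow> (int \<Rightarrow> nat \<Rightarrow> real)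
   \<Rightarrow> ((nat \<Rightarrow> nat) \<Rightarrow> complex) set" where
  "abs_conv_solutions c K a b cc d =
     {q. (\<forall>n. n \<notin> Wset c \<longrightarrow> q n = 0) \<and> (\<lambda>n. norm (q n)) summable_on Wset c \<and>
         (\<forall>n\<in>Wset c. int (n 0) \<ge> K \<longrightarrow> inner_eq c K a b cc d q n)}"

definition cscale :: "complex \<Rightarrow> ('a \<Rightarrow> complex) \<Rightarrow> ('a \<Rightarrow> complex)" where
  "cscale z f = (\<lambda>x. z * f x)"

end

theory Submission
  imports Defs
begin


definition tr :: "(int \<Rightarrow> nat \<Rightarrow> real) \<Rightarrow> (int \<Rightarrow> nat \<Rightarrow> real) \<Rightarrow> (int \<Rightarrow> nat \<Rightarrow> real) \<Rightarrow> (int \<Rightarrow> nat \<Rightarrow> real)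
   \<Rightarrow> (nat \<Rightarrow> nat) \<Rightarrow> nat \<Rightarrow> int \<Rightarrow> real" where
  "tr a b cc d n i k = (1 - real (n i)) * (a k i + b k i) + real (n i) * (cc k i + d k i)"

definition msum :: "(int \<Rightarrow> nat \<Rightarrow> real) \<Rightarrow> (int \<Rightarrow> nat \<Rightarrow> real) \<Rightarrow> (int \<Rightarrow> nat \<Rightarrow> real) \<Rightarrow> (int \<Rightarrow> nat \<Rightarrow> real)
   \<Rightarrow> int \<Rightarrow> nat \<Rightarrow> real" where
  "msum a b cc d k i = a k i + b k i + cc k i + d k i"

definition src :: "(nat \<Rightarrow> nat) \<Rightarrow> nat \<Rightarrow> int \<Rightarrow> nat \<Rightarrow> (nat \<Rightarrow> nat)" where
  "src n i k p = (shift0 n (-k))(i := p)"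

lemma shift0_0[simp]: "shift0 n k 0 = nat (int (n 0) + k)"
  by (simp add: shift0_def)
lemma shift0_other[simp]: "j \<noteq> 0 \<Longrightarrow> shift0 n k j = n j"
  by (simp add: shift0_def)

lemma W_bin: "n \<in> Wset c \<Longrightarrow> i \<in> {1..c} \<Longrightarrow> n i = 0 \<or> n i = 1"
  unfolding Wset_def by force

lemma W_upd: "n \<in> Wset c \<Longrightarrow> i \<in> {1..c} \<Longrightarrow> p \<le> 1 \<Longrightarrow> (shift0 n k)(i := p) \<in> Wset c"
  unfolding Wset_def shift0_def by auto

lemma W_shift: "n \<in> Wset c \<Longrightarrow> shift0 n k \<in> Wset c"
  unfolding Wset_def shift0_def by auto

lemma HF:
  fixes f :: "'a \<times> 'b \<Rightarrow> real"
  assumes "finite A" "\<And>x. x \<in> A \<Longrightarrow> (\<lambda>y. f (x, y)) summable_on B"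
  shows "f summable_on A \<times> B \<and> infsum f (A \<times> B) = (\<Sum>x\<in>A. infsum (\<lambda>y. f (x, y)) B)"
proof -
  have eq: "A \<times> B = (\<Union>x\<in>A. Pair x ` B)" by auto
  have s: "f summable_on Pair x ` B" if "x \<in> A" for x
    using assms(2)[OF that] by (subst summable_on_reindex) (auto simp: inj_on_def o_def)
  have i: "infsum f (Pair x ` B) = infsum (\<lambda>y. f (x, y)) B" for x
    by (subst infsum_reindex) (auto simp: inj_on_def o_def)
  have d: "\<And>x x'. x\<in>A \<Longrightarrow> x'\<in>A \<Longrightarrow> x\<noteq>x' \<Longrightarrow> Pair x ` B \<inter> Pair x' ` B = {}" by auto
  show ?thesis
    unfolding eq using summable_on_finite_union_disjoint[OF assms(1) s d]
      sum_infsum[OF assms(1) s d] i by simp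
qed




definition gterm where
 "gterm a b cc d q n i k =
   complex_of_real (1 - real (n i)) *
          (complex_of_real (b k i) * q (shift0 n (-k)) + complex_of_real (d k i) * q ((shift0 n (-k))(i := 1)))
      + complex_of_real (real (n i)) *
          (complex_of_real (a k i) * q ((shift0 n (-k))(i := 0)) + complex_of_real (cc k i) * q (shift0 n (-k)))"

definition rin where
 "rin a b cc d n i k p = jump_rate a b cc d (src n i k p) i k (n i)"

lemma inner_eq_alt: "inner_eq c K a b cc d q n \<longleftrightarrow>
  (\<Sum>i=1..c. \<Sum>\<^sub>\<infinity>k\<in>{..K}. complex_of_real (tr a b cc d n i k) * q n) =
  (\<Sum>i=1..c. \<Sum>\<^sub>\<infinity>k\<in>{..K}. gterm a b cc d q n i k)"
  by (simp add: inner_eq_def tr_def gterm_def)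

definition Cs where "Cs c K a b cc d = (\<Sum>i=1..c. \<Sum>\<^sub>\<infinity>k\<in>{..K}. msum a b cc d k i)"
definition Tt where "Tt c K a b cc d n = (\<Sum>i=1..c. \<Sum>\<^sub>\<infinity>k\<in>{..K}. tr a b cc d n i k)"

context
  fixes c :: nat and K :: int and a b cc d :: "int \<Rightarrow> nat \<Rightarrow> real"
  assumes rn: "\<forall>i\<in>{1..c}. \<forall>k\<le>K. a k i \<ge> 0 \<and> b k i \<ge> 0 \<and> cc k i \<ge> 0 \<and> d k i \<ge> 0"
    and rf: "\<forall>i\<in>{1..c}. (\<lambda>k. a k i) summable_on {..K} \<and> (\<lambda>k. b k i) summable_on {..K}
                      \<and> (\<lambda>k. cc k i) summable_on {..K} \<and> (\<lambda>k. d k i) summable_on {..K}"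
begin

lemma msum_nonneg: "i \<in> {1..c} \<Longrightarrow> k \<le> K \<Longrightarrow> 0 \<le> msum a b cc d k i"
  using rn by (auto simp: msum_def)

lemma msum_summable: assumes "i \<in> {1..c}" "X \<subseteq> {..K}"
  shows "(\<lambda>k. msum a b cc d k i) summable_on X"
proof -
  have "(\<lambda>k. msum a b cc d k i) summable_on {..K}"
    unfolding msum_def using rf assms(1) by (intro summable_on_add) auto
  then show ?thesis using assms(2) summable_on_subset_banach by blast
qed

lemma tr_bounds: "n \<in> Wset c \<Longrightarrow> i \<in> {1..c} \<Longrightarrow> k \<le> K \<Longrightarrow>
   0 \<le> tr a b cc d n i k \<and> tr a b cc d n i k \<le> msum a b cc d k i"
  using W_bin[of n c i] rn by (auto simp: tr_def msum_def)

lemma jr_bounds: "i \<in> {1..c} \<Longrightarrow> k \<le> K \<Longrightarrow>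
   0 \<le> jump_rate a b cc d m i k j \<and> jump_rate a b cc d m i k j \<le> msum a b cc d k i"
  using rn by (auto simp: jump_rate_def msum_def)

lemma jr_tr: "m \<in> Wset c \<Longrightarrow> i \<in> {1..c} \<Longrightarrow>
   jump_rate a b cc d m i k 0 + jump_rate a b cc d m i k 1 = tr a b cc d m i k"
  using W_bin[of m c i] by (auto simp: jump_rate_def tr_def)

lemma tr_summable: assumes "n \<in> Wset c" "i \<in> {1..c}" "X \<subseteq> {..K}"
  shows "(\<lambda>k. tr a b cc d n i k) summable_on X"
  by (rule summable_on_comparison_test[OF msum_summable[OF assms(2,3)]])
     (use tr_bounds[OF assms(1,2)] assms(3) in auto)


lemma Tt_bounds: assumes "n \<in> Wset c" shows "0 \<le> Tt c K a b cc d n \<and> Tt c K a b cc d n \<le> Cs c K a b cc d"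
proof -
  have "0 \<le> Tt c K a b cc d n" unfolding Tt_def
    by (intro sum_nonneg infsum_nonneg) (use tr_bounds[OF assms] in auto)
  moreover have "Tt c K a b cc d n \<le> Cs c K a b cc d" unfolding Tt_def Cs_def
    by (intro sum_mono infsum_mono tr_summable msum_summable assms) (use tr_bounds[OF assms] in auto)
  ultimately show ?thesis by blast
qed

lemma gterm_bound: assumes "n \<in> Wset c" "i \<in> {1..c}" "k \<le> K"
  shows "norm (gterm a b cc d q n i k) \<le> rin a b cc d n i k 0 * norm (q (src n i k 0))
                                        + rin a b cc d n i k 1 * norm (q (src n i k 1))"
proof -
  have i0: "i \<noteq> 0" using assms(2) by auto
  have nn: "a k i \<ge> 0" "b k i \<ge> 0" "cc k i \<ge> 0" "d k i \<ge> 0" using rn assms(2,3) by auto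
  from W_bin[OF assms(1,2)] show ?thesis
  proof
    assume h: "n i = 0"
    have e: "(shift0 n (-k))(i := 0) = shift0 n (-k)" using i0 h by (auto simp: fun_eq_iff)
    have "norm (gterm a b cc d q n i k) = norm (complex_of_real (b k i) * q (shift0 n (-k)) + complex_of_real (d k i) * q ((shift0 n (-k))(i := 1)))"
      using h by (simp add: gterm_def)
    also have "\<dots> \<le> norm (complex_of_real (b k i) * q (shift0 n (-k))) + norm (complex_of_real (d k i) * q ((shift0 n (-k))(i := 1)))"
      by (rule norm_triangle_ineq)
    also have "\<dots> = b k i * norm (q (shift0 n (-k))) + d k i * norm (q ((shift0 n (-k))(i := 1)))"
      using nn by (simp add: norm_mult)
    finally show ?thesis using h e i0 by (simp add: rin_def src_def jump_rate_def)
  next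
    assume h: "n i = 1"
    have e: "(shift0 n (-k))(i := 1) = shift0 n (-k)" using i0 h by (auto simp: fun_eq_iff)
    have "norm (gterm a b cc d q n i k) = norm (complex_of_real (a k i) * q ((shift0 n (-k))(i := 0)) + complex_of_real (cc k i) * q (shift0 n (-k)))"
      using h by (simp add: gterm_def)
    also have "\<dots> \<le> norm (complex_of_real (a k i) * q ((shift0 n (-k))(i := 0))) + norm (complex_of_real (cc k i) * q (shift0 n (-k)))"
      by (rule norm_triangle_ineq)
    also have "\<dots> = a k i * norm (q ((shift0 n (-k))(i := 0))) + cc k i * norm (q (shift0 n (-k)))"
      using nn by (simp add: norm_mult)
    finally show ?thesis using h e i0 by (simp add: rin_def src_def jump_rate_def)
  qed
qed

end



definition Inner :: "int \<Rightarrow> nat \<Rightarrow> (nat \<Rightarrow> nat) \<Rightarrow> (nat \<times> nat \<times> int) set" where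
  "Inner K c n = {0::nat,1} \<times> ({1..c} \<times> {..min K (int (n 0))})"

definition Bq where "Bq c q = (\<Sum>\<^sub>\<infinity>n\<in>Wset c. norm (q n))"
definition Fn where "Fn c K a b cc d q n = infsum (\<lambda>(p,i,k). rin a b cc d n i k p * norm (q (src n i k p))) (Inner K c n)"

context
  fixes c :: nat and K :: int and a b cc d :: "int \<Rightarrow> nat \<Rightarrow> real" and q :: "(nat \<Rightarrow> nat) \<Rightarrow> complex"
  assumes rn: "\<forall>i\<in>{1..c}. \<forall>k\<le>K. a k i \<ge> 0 \<and> b k i \<ge> 0 \<and> cc k i \<ge> 0 \<and> d k i \<ge> 0"
    and rf: "\<forall>i\<in>{1..c}. (\<lambda>k. a k i) summable_on {..K} \<and> (\<lambda>k. b k i) summable_on {..K}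
                      \<and> (\<lambda>k. cc k i) summable_on {..K} \<and> (\<lambda>k. d k i) summable_on {..K}"
    and q0: "\<forall>n. n \<notin> Wset c \<longrightarrow> q n = 0"
    and qs: "(\<lambda>n. norm (q n)) summable_on Wset c"
begin

lemmas msum_nonneg_C = msum_nonneg[OF rn rf]
lemmas msum_summable_C = msum_summable[OF rn rf]
lemmas tr_bounds_C = tr_bounds[OF rn rf]
lemmas jr_bounds_C = jr_bounds[OF rn rf]
lemmas tr_summable_C = tr_summable[OF rn rf]
lemmas Tt_bounds_C = Tt_bounds[OF rn rf]
lemmas gterm_bound_C = gterm_bound[OF rn rf]


lemma qbound: "norm (q x) \<le> Bq c q"
proof (cases "x \<in> Wset c")
  case True
  have "infsum (\<lambda>n. norm (q n)) {x} \<le> Bq c q" unfolding Bq_def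
    by (rule infsum_mono2) (use True qs in auto)
  then show ?thesis by simp
next
  case False
  then show ?thesis using q0 by (simp add: Bq_def infsum_nonneg)
qed

lemma Bq_nonneg: "0 \<le> Bq c q" using qbound[of x] norm_ge_zero order_trans by blast

lemma rterm_summable: assumes "i \<in> {1..c}" "X \<subseteq> {..K}"
  shows "(\<lambda>k. rin a b cc d n i k p * norm (q (src n i k p))) summable_on X"
proof -
  have "(\<lambda>k. msum a b cc d k i * Bq c q) summable_on X"
    using msum_summable_C[OF assms] by (rule summable_on_cmult_left)
  then show ?thesis
    by (rule summable_on_comparison_test)
       (use assms jr_bounds_C[of i] qbound msum_nonneg_C[of i] in \<open>auto simp: rin_def intro!: mult_mono\<close>)
qed

lemma rterm_nonneg: "i \<in> {1..c} \<Longrightarrow> k \<le> K \<Longrightarrow> 0 \<le> rin a b cc d n i k p * norm (q (src n i k p))"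
  using jr_bounds_C[of i k] by (simp add: rin_def)

lemma gterm_abs_summable: assumes "n \<in> Wset c" "i \<in> {1..c}"
  shows "(\<lambda>k. norm (gterm a b cc d q n i k)) summable_on {..K}"
proof -
  have "(\<lambda>k. rin a b cc d n i k 0 * norm (q (src n i k 0)) + rin a b cc d n i k 1 * norm (q (src n i k 1)))
     summable_on {..K}"
    by (intro summable_on_add rterm_summable assms) auto
  then show ?thesis
    by (rule summable_on_comparison_test) (use gterm_bound_C[OF assms] in auto)
qed

lemma gterm_summable: "n \<in> Wset c \<Longrightarrow> i \<in> {1..c} \<Longrightarrow> (\<lambda>k. gterm a b cc d q n i k) summable_on {..K}"
  using gterm_abs_summable abs_summable_summable by (metis (no_types, lifting) summable_on_cong)


lemma Fn_expand:
  "(\<lambda>(p,i,k). rin a b cc d n i k p * norm (q (src n i k p))) summable_on (Inner K c n) \<and>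
   Fn c K a b cc d q n = (\<Sum>p\<in>{0,1}. \<Sum>i=1..c. \<Sum>\<^sub>\<infinity>k\<in>{..min K (int (n 0))}. rin a b cc d n i k p * norm (q (src n i k p)))"
proof -
  have inner: "(\<lambda>(i,k). rin a b cc d n i k p * norm (q (src n i k p))) summable_on {1..c} \<times> {..min K (int (n 0))} \<and>
     infsum (\<lambda>(i,k). rin a b cc d n i k p * norm (q (src n i k p))) ({1..c} \<times> {..min K (int (n 0))}) =
     (\<Sum>i=1..c. \<Sum>\<^sub>\<infinity>k\<in>{..min K (int (n 0))}. rin a b cc d n i k p * norm (q (src n i k p)))" for p
    using HF[of "{1..c}" "\<lambda>(i,k). rin a b cc d n i k p * norm (q (src n i k p))" "{..min K (int (n 0))}"]
      rterm_summable by auto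
  show ?thesis
    using HF[of "{0::nat,1}" "\<lambda>(p,i,k). rin a b cc d n i k p * norm (q (src n i k p))" "{1..c} \<times> {..min K (int (n 0))}"]
      inner unfolding Fn_def Inner_def by (simp add: case_prod_unfold)
qed

lemma Fn_nonneg: "0 \<le> Fn c K a b cc d q n"
  unfolding Fn_def Inner_def by (rule infsum_nonneg) (auto intro!: rterm_nonneg)

lemma step1: assumes n: "n \<in> Wset c" and lev: "K \<le> int (n 0)" and ie: "inner_eq c K a b cc d q n"
  shows "norm (q n) * Tt c K a b cc d n \<le> Fn c K a b cc d q n"
proof -
  have mK: "min K (int (n 0)) = K" using lev by simp
  have L: "(\<Sum>i=1..c. \<Sum>\<^sub>\<infinity>k\<in>{..K}. complex_of_real (tr a b cc d n i k) * q n)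
        = complex_of_real (Tt c K a b cc d n) * q n"
  proof -
    have "(\<Sum>\<^sub>\<infinity>k\<in>{..K}. complex_of_real (tr a b cc d n i k) * q n) =
           complex_of_real (\<Sum>\<^sub>\<infinity>k\<in>{..K}. tr a b cc d n i k) * q n" if "i \<in> {1..c}" for i
    proof -
      have e: "(\<Sum>\<^sub>\<infinity>k\<in>{..K}. complex_of_real (tr a b cc d n i k)) = complex_of_real (\<Sum>\<^sub>\<infinity>k\<in>{..K}. tr a b cc d n i k)"
        by (rule infsumI[OF has_sum_of_real[OF has_sum_infsum[OF tr_summable_C[OF n that order_refl]]]])
      show ?thesis by (simp add: infsum_cmult_left' e)
    qed
    then show ?thesis by (simp add: Tt_def sum_distrib_right)
  qed
  have "norm (q n) * Tt c K a b cc d n = norm (complex_of_real (Tt c K a b cc d n) * q n)"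
    using Tt_bounds_C[OF n] by (simp add: norm_mult)
  also have "\<dots> = norm (\<Sum>i=1..c. \<Sum>\<^sub>\<infinity>k\<in>{..K}. gterm a b cc d q n i k)"
    using ie L by (simp add: inner_eq_alt)
  also have "\<dots> \<le> (\<Sum>i=1..c. norm (\<Sum>\<^sub>\<infinity>k\<in>{..K}. gterm a b cc d q n i k))"
    by (rule norm_sum)
  also have "\<dots> \<le> (\<Sum>i=1..c. \<Sum>\<^sub>\<infinity>k\<in>{..K}. norm (gterm a b cc d q n i k))"
    by (intro sum_mono norm_infsum_bound gterm_abs_summable n) auto
  also have "\<dots> \<le> (\<Sum>i=1..c. \<Sum>\<^sub>\<infinity>k\<in>{..K}. rin a b cc d n i k 0 * norm (q (src n i k 0)) + rin a b cc d n i k 1 * norm (q (src n i k 1)))"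
    by (intro sum_mono infsum_mono gterm_abs_summable n summable_on_add rterm_summable gterm_bound_C)
      auto
  also have "\<dots> = (\<Sum>i=1..c. (\<Sum>\<^sub>\<infinity>k\<in>{..K}. rin a b cc d n i k 0 * norm (q (src n i k 0))) + (\<Sum>\<^sub>\<infinity>k\<in>{..K}. rin a b cc d n i k 1 * norm (q (src n i k 1))))"
    by (intro sum.cong refl infsum_add rterm_summable) auto
  also have "\<dots> = Fn c K a b cc d q n"
    using Fn_expand[of n] mK by (simp add: sum.distrib)
  finally show ?thesis .
qed

end



definition Outer :: "int \<Rightarrow> nat \<Rightarrow> (nat \<Rightarrow> nat) \<Rightarrow> (nat \<times> nat \<times> int) set" where
  "Outer K c m = {0::nat,1} \<times> ({1..c} \<times> {- int (m 0)..K})"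

definition Tin where "Tin c K a b cc d m = (\<Sum>i=1..c. \<Sum>k\<in>{- int (m 0)..K}. tr a b cc d m i k)"
definition Vf where "Vf c a b cc d m = (\<Sum>i=1..c. \<Sum>\<^sub>\<infinity>k\<in>{..- int (m 0) - 1}. tr a b cc d m i k)"

lemma src_apply: "i \<noteq> 0 \<Longrightarrow> src n i k p j = (if j = i then p else if j = 0 then nat (int (n 0) - k) else n j)"
  by (simp add: src_def shift0_def)
lemma upd_apply: "i \<noteq> 0 \<Longrightarrow> ((shift0 m k)(i := j)) l = (if l = i then j else if l = 0 then nat (int (m 0) + k) else m l)"
  by (simp add: shift0_def)

lemma W_pos[simp]: "n \<in> Wset c \<Longrightarrow> Suc 0 \<le> i \<Longrightarrow> i \<le> c \<Longrightarrow> (0 < n i) = (n i = Suc 0)"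
  using W_bin[of n c i] by force

context
  fixes c :: nat and K :: int and a b cc d :: "int \<Rightarrow> nat \<Rightarrow> real" and q :: "(nat \<Rightarrow> nat) \<Rightarrow> complex"
  assumes rn: "\<forall>i\<in>{1..c}. \<forall>k\<le>K. a k i \<ge> 0 \<and> b k i \<ge> 0 \<and> cc k i \<ge> 0 \<and> d k i \<ge> 0"
    and rf: "\<forall>i\<in>{1..c}. (\<lambda>k. a k i) summable_on {..K} \<and> (\<lambda>k. b k i) summable_on {..K}
                      \<and> (\<lambda>k. cc k i) summable_on {..K} \<and> (\<lambda>k. d k i) summable_on {..K}"
    and q0: "\<forall>n. n \<notin> Wset c \<longrightarrow> q n = 0"
    and qs: "(\<lambda>n. norm (q n)) summable_on Wset c"
    and Kp: "K \<ge> 1"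
begin

lemmas tr_bounds_D = tr_bounds[OF rn rf]
lemmas jr_bounds_D = jr_bounds[OF rn rf]
lemmas jr_tr_D = jr_tr[OF rn rf]
lemmas tr_summable_D = tr_summable[OF rn rf]
lemmas Tt_bounds_D = Tt_bounds[OF rn rf]
lemmas Fn_expand_D = Fn_expand[OF rn rf q0 qs]
lemmas Fn_nonneg_D = Fn_nonneg[OF rn rf q0 qs]
lemmas step1_D = step1[OF rn rf q0 qs]

lemma TtV: assumes m: "m \<in> Wset c"
  shows "Tt c K a b cc d m = Tin c K a b cc d m + Vf c a b cc d m"
proof -
  have "(\<Sum>\<^sub>\<infinity>k\<in>{..K}. tr a b cc d m i k) = (\<Sum>k\<in>{- int (m 0)..K}. tr a b cc d m i k) + (\<Sum>\<^sub>\<infinity>k\<in>{..- int (m 0) - 1}. tr a b cc d m i k)"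
    if i: "i \<in> {1..c}" for i
  proof -
    have e: "{..K} = {- int (m 0)..K} \<union> {..- int (m 0) - 1}" using Kp by auto
    have "(\<Sum>\<^sub>\<infinity>k\<in>{..K}. tr a b cc d m i k) = (\<Sum>\<^sub>\<infinity>k\<in>{- int (m 0)..K}. tr a b cc d m i k) + (\<Sum>\<^sub>\<infinity>k\<in>{..- int (m 0) - 1}. tr a b cc d m i k)"
      unfolding e by (rule infsum_Un_disjoint) (use tr_summable_D[OF m i] Kp in auto)
    then show ?thesis by simp
  qed
  then show ?thesis unfolding Tt_def Tin_def Vf_def by (simp add: sum.distrib)
qed

lemma Vf_nonneg: "m \<in> Wset c \<Longrightarrow> 0 \<le> Vf c a b cc d m"
  unfolding Vf_def by (intro sum_nonneg infsum_nonneg) (use tr_bounds_D Kp in auto)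

lemma Tin_bounds: "m \<in> Wset c \<Longrightarrow> 0 \<le> Tin c K a b cc d m \<and> Tin c K a b cc d m \<le> Cs c K a b cc d"
proof -
  assume m: "m \<in> Wset c"
  have "0 \<le> Tin c K a b cc d m" unfolding Tin_def
    by (intro sum_nonneg) (use tr_bounds_D[OF m] in auto)
  then show ?thesis using TtV[OF m] Vf_nonneg[OF m] Tt_bounds_D[OF m] by auto
qed

lemma outer_sum: assumes m: "m \<in> Wset c"
  shows "(\<Sum>\<^sub>\<infinity>y\<in>Outer K c m. (\<lambda>(j,i,k). jump_rate a b cc d m i k j * norm (q m)) y) = norm (q m) * Tin c K a b cc d m"
proof -
  have fin: "finite (Outer K c m)" unfolding Outer_def by auto
  have "(\<Sum>\<^sub>\<infinity>y\<in>Outer K c m. (\<lambda>(j,i,k). jump_rate a b cc d m i k j * norm (q m)) y)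
      = (\<Sum>j\<in>{0::nat,1}. \<Sum>i=1..c. \<Sum>k\<in>{- int (m 0)..K}. jump_rate a b cc d m i k j * norm (q m))"
    using fin unfolding Outer_def by (simp add: sum.cartesian_product[symmetric])
  also have "\<dots> = (\<Sum>i=1..c. \<Sum>k\<in>{- int (m 0)..K}. (jump_rate a b cc d m i k 0 + jump_rate a b cc d m i k 1) * norm (q m))"
    by (simp add: sum.distrib distrib_right)
  also have "\<dots> = (\<Sum>i=1..c. \<Sum>k\<in>{- int (m 0)..K}. norm (q m) * tr a b cc d m i k)"
    by (intro sum.cong refl) (simp add: jr_tr_D[OF m, unfolded One_nat_def] mult.commute)
  also have "\<dots> = norm (q m) * Tin c K a b cc d m"
    unfolding Tin_def by (simp add: sum_distrib_left)
  finally show ?thesis .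
qed

definition fJ where "fJ = (\<lambda>(m,j,i,k). jump_rate a b cc d m i k j * norm (q m))"
definition gI where "gI = (\<lambda>(n,p,i,k). rin a b cc d n i k p * norm (q (src n i k p)))"

lemma fJ_nonneg: "x \<in> Sigma (Wset c) (Outer K c) \<Longrightarrow> 0 \<le> fJ x"
proof -
  assume "x \<in> Sigma (Wset c) (Outer K c)"
  then obtain m j i k where x: "x = (m,j,i,k)" and i: "i \<in> {1..c}" and k: "k \<le> K"
    unfolding Outer_def by auto
  show ?thesis unfolding x fJ_def using jr_bounds_D[OF i k, of m j] by simp
qed

lemma J_sum: "fJ summable_on Sigma (Wset c) (Outer K c) \<and>
   infsum fJ (Sigma (Wset c) (Outer K c)) = (\<Sum>\<^sub>\<infinity>m\<in>Wset c. norm (q m) * Tin c K a b cc d m)"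
proof -
  have os: "(\<Sum>\<^sub>\<infinity>y\<in>Outer K c m. fJ (m, y)) = norm (q m) * Tin c K a b cc d m" if "m \<in> Wset c" for m
    using outer_sum[OF that] unfolding fJ_def by (simp add: case_prod_unfold)
  have osn: "(\<Sum>\<^sub>\<infinity>y\<in>Outer K c m. norm (fJ (m, y))) = norm (q m) * Tin c K a b cc d m" if "m \<in> Wset c" for m
  proof -
    have "(\<Sum>\<^sub>\<infinity>y\<in>Outer K c m. norm (fJ (m, y))) = (\<Sum>\<^sub>\<infinity>y\<in>Outer K c m. fJ (m, y))"
      by (rule infsum_cong) (use fJ_nonneg that in auto)
    then show ?thesis using os[OF that] by simp
  qed
  have ps: "(\<lambda>m. norm (q m) * Tin c K a b cc d m) summable_on Wset c"
  proof (rule summable_on_comparison_test)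
    show "(\<lambda>m. norm (q m) * Cs c K a b cc d) summable_on Wset c"
      using qs by (rule summable_on_cmult_left)
  qed (use Tin_bounds in \<open>auto intro!: mult_left_mono\<close>)
  have "(\<lambda>x. norm (fJ x)) summable_on Sigma (Wset c) (Outer K c)"
  proof (rule Infinite_Sum.abs_summable_on_Sigma_iff[THEN iffD2], intro conjI ballI)
    show "(\<lambda>y. norm (fJ (x, y))) summable_on Outer K c x" for x
      unfolding Outer_def by simp
    show "(\<lambda>x. norm (\<Sum>\<^sub>\<infinity>y\<in>Outer K c x. norm (fJ (x, y)))) summable_on Wset c"
      using ps by (rule summable_on_cong[THEN iffD1, rotated]) (use osn Tin_bounds in auto)
  qed
  then have fs: "fJ summable_on Sigma (Wset c) (Outer K c)"
    by (rule abs_summable_summable)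
  have "infsum fJ (Sigma (Wset c) (Outer K c)) = (\<Sum>\<^sub>\<infinity>m\<in>Wset c. \<Sum>\<^sub>\<infinity>y\<in>Outer K c m. fJ (m, y))"
    using infsum_Sigma_banach[OF fs] by simp
  also have "\<dots> = (\<Sum>\<^sub>\<infinity>m\<in>Wset c. norm (q m) * Tin c K a b cc d m)"
    by (rule infsum_cong) (rule os)
  finally show ?thesis using fs by blast
qed

lemma I_sum: "gI summable_on Sigma (Wset c) (Inner K c) \<and>
   infsum gI (Sigma (Wset c) (Inner K c)) = infsum fJ (Sigma (Wset c) (Outer K c))"
proof -
  let ?ph = "\<lambda>(n,p,i,k). (src n i k p, n i, i, k)"
  let ?ps = "\<lambda>(m,j,i,k). ((shift0 m k)(i := j), m i, i, k)"
  have 1: "?ps (?ph x) = x" if "x \<in> Sigma (Wset c) (Inner K c)" for x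
    using that unfolding Inner_def
    by (auto simp: fun_eq_iff src_def shift0_def)
  have 2: "?ph x \<in> Sigma (Wset c) (Outer K c)" if "x \<in> Sigma (Wset c) (Inner K c)" for x
    using that W_bin unfolding Inner_def Outer_def src_def by (auto intro!: W_upd)
  have 3: "?ph (?ps y) = y" if "y \<in> Sigma (Wset c) (Outer K c)" for y
    using that unfolding Outer_def
    by (auto simp: fun_eq_iff src_def shift0_def)
  have 4: "?ps y \<in> Sigma (Wset c) (Inner K c)" if "y \<in> Sigma (Wset c) (Outer K c)" for y
    using that W_bin unfolding Inner_def Outer_def by (auto intro!: W_upd)
  have 5: "fJ (?ph x) = gI x" for x
    unfolding fJ_def gI_def rin_def by (auto simp: case_prod_unfold)
  have s: "gI summable_on Sigma (Wset c) (Inner K c) \<longleftrightarrow> fJ summable_on Sigma (Wset c) (Outer K c)"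
    by (rule summable_on_reindex_bij_witness[of "Sigma (Wset c) (Inner K c)" ?ps ?ph _ fJ gI, OF 1 2 3 4 5])
  have e: "infsum gI (Sigma (Wset c) (Inner K c)) = infsum fJ (Sigma (Wset c) (Outer K c))"
    by (rule infsum_reindex_bij_witness[of "Sigma (Wset c) (Inner K c)" ?ps ?ph _ fJ gI, OF 1 2 3 4 5])
  show ?thesis using s e J_sum by simp
qed

end



context
  fixes c :: nat and K :: int and a b cc d :: "int \<Rightarrow> nat \<Rightarrow> real" and q :: "(nat \<Rightarrow> nat) \<Rightarrow> complex"
  assumes rn: "\<forall>i\<in>{1..c}. \<forall>k\<le>K. a k i \<ge> 0 \<and> b k i \<ge> 0 \<and> cc k i \<ge> 0 \<and> d k i \<ge> 0"
    and rf: "\<forall>i\<in>{1..c}. (\<lambda>k. a k i) summable_on {..K} \<and> (\<lambda>k. b k i) summable_on {..K}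
                      \<and> (\<lambda>k. cc k i) summable_on {..K} \<and> (\<lambda>k. d k i) summable_on {..K}"
    and q0: "\<forall>n. n \<notin> Wset c \<longrightarrow> q n = 0"
    and qs: "(\<lambda>n. norm (q n)) summable_on Wset c"
    and Kp: "K \<ge> 1"
    and ie: "\<forall>n\<in>Wset c. K \<le> int (n 0) \<longrightarrow> inner_eq c K a b cc d q n"
    and zl: "\<forall>n\<in>Wset c. int (n 0) < K \<longrightarrow> q n = 0"
begin

lemmas I_sum_E = I_sum[OF rn rf q0 qs Kp]
lemmas J_sum_E = J_sum[OF rn rf q0 qs Kp]
lemmas TtV_E = TtV[OF rn rf q0 qs Kp]
lemmas Vf_nonneg_E = Vf_nonneg[OF rn rf q0 qs Kp]
lemmas Tin_bounds_E = Tin_bounds[OF rn rf q0 qs Kp]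
lemmas Tt_bounds_E = Tt_bounds[OF rn rf]
lemmas Fn_nonneg_E = Fn_nonneg[OF rn rf q0 qs]
lemmas Fn_expand_E = Fn_expand[OF rn rf q0 qs]
lemmas step1_E = step1[OF rn rf q0 qs]

lemma F_sum: "(\<lambda>n. Fn c K a b cc d q n) summable_on Wset c \<and>
  (\<Sum>\<^sub>\<infinity>n\<in>Wset c. Fn c K a b cc d q n) = (\<Sum>\<^sub>\<infinity>m\<in>Wset c. norm (q m) * Tin c K a b cc d m)"
proof -
  let ?g = "gI a b cc d q"
  have gs: "(\<lambda>(x,y). ?g (x, y)) summable_on Sigma (Wset c) (Inner K c)"
    using I_sum_E by (simp add: case_prod_beta')
  have e: "(\<Sum>\<^sub>\<infinity>y\<in>Inner K c n. ?g (n, y)) = Fn c K a b cc d q n" for n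
    unfolding Fn_def gI_def[OF rn rf q0 qs Kp] by (simp add: case_prod_beta')
  have 1: "(\<lambda>n. \<Sum>\<^sub>\<infinity>y\<in>Inner K c n. ?g (n, y)) summable_on Wset c"
    using summable_on_Sigma_banach[OF gs] .
  have 2: "(\<Sum>\<^sub>\<infinity>n\<in>Wset c. \<Sum>\<^sub>\<infinity>y\<in>Inner K c n. ?g (n, y)) = infsum ?g (Sigma (Wset c) (Inner K c))"
    using infsum_Sigma'_banach[OF gs] by (simp add: case_prod_beta')
  show ?thesis using 1 2 I_sum_E J_sum_E unfolding e by simp
qed

lemma FG: "n \<in> Wset c \<Longrightarrow> norm (q n) * Tt c K a b cc d n \<le> Fn c K a b cc d q n"
proof -
  assume n: "n \<in> Wset c"
  show ?thesis
  proof (cases "K \<le> int (n 0)")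
    case True then show ?thesis using step1_E[OF n True] ie n by blast
  next
    case False then show ?thesis using zl n Fn_nonneg_E by simp
  qed
qed

lemma balance: "(\<forall>m\<in>Wset c. norm (q m) * Vf c a b cc d m = 0) \<and>
   (\<forall>n\<in>Wset c. Fn c K a b cc d q n = norm (q n) * Tt c K a b cc d n)"
proof -
  let ?F = "\<lambda>n. Fn c K a b cc d q n"
  let ?G = "\<lambda>n. norm (q n) * Tt c K a b cc d n"
  let ?P = "\<lambda>n. norm (q n) * Tin c K a b cc d n"
  let ?H = "\<lambda>n. norm (q n) * Vf c a b cc d n"
  have Fs: "?F summable_on Wset c" and FP: "infsum ?F (Wset c) = infsum ?P (Wset c)"
    using F_sum by auto
  have Gs: "?G summable_on Wset c"
  proof (rule summable_on_comparison_test)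
    show "(\<lambda>m. norm (q m) * Cs c K a b cc d) summable_on Wset c"
      using qs by (rule summable_on_cmult_left)
  qed (use Tt_bounds_E in \<open>auto intro!: mult_left_mono\<close>)
  have Hs: "?H summable_on Wset c"
  proof (rule summable_on_comparison_test[OF Gs])
  qed (use TtV_E Vf_nonneg_E Tin_bounds_E in \<open>auto intro!: mult_left_mono\<close>)
  have Ps: "?P summable_on Wset c"
  proof (rule summable_on_comparison_test[OF Gs])
  qed (use TtV_E Vf_nonneg_E Tin_bounds_E in \<open>auto intro!: mult_left_mono\<close>)
  have GPH: "infsum ?G (Wset c) = infsum ?P (Wset c) + infsum ?H (Wset c)"
  proof -
    have "infsum ?G (Wset c) = infsum (\<lambda>n. ?P n + ?H n) (Wset c)"
      by (rule infsum_cong) (simp add: TtV_E distrib_left)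
    then show ?thesis using infsum_add[OF Ps Hs] by simp
  qed
  have GF: "infsum ?G (Wset c) \<le> infsum ?F (Wset c)"
    by (rule infsum_mono[OF Gs Fs]) (rule FG)
  have H0: "infsum ?H (Wset c) \<le> 0" using GPH GF FP by simp
  have Hz: "\<forall>m\<in>Wset c. ?H m = 0"
    using nonneg_infsum_le_0D[OF H0 Hs] Vf_nonneg_E by auto
  have Ds: "(\<lambda>n. ?F n - ?G n) summable_on Wset c"
    using summable_on_add[OF Fs summable_on_uminus[THEN iffD2, OF Gs]] by simp
  have "infsum (\<lambda>n. ?F n - ?G n) (Wset c) = infsum ?F (Wset c) - infsum ?G (Wset c)"
    using infsum_add[OF Fs summable_on_uminus[THEN iffD2, OF Gs]] infsum_uminus[of ?G "Wset c"] by simp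
  also have "\<dots> \<le> 0" using GPH FP H0 Hz
    by (simp add: infsum_0)
  finally have D0: "infsum (\<lambda>n. ?F n - ?G n) (Wset c) \<le> 0" .
  have "\<forall>n\<in>Wset c. ?F n - ?G n = 0"
    using nonneg_infsum_le_0D[OF D0 Ds] FG by auto
  then show ?thesis using Hz by auto
qed

lemma prop_zero: assumes n: "n \<in> Wset c" and qn: "q n = 0"
  and x: "x \<in> Inner K c n" and x': "x = (p, i, k)"
  shows "rin a b cc d n i k p * norm (q (src n i k p)) = 0"
proof -
  have F0: "Fn c K a b cc d q n = 0" using balance n qn by simp
  have s: "(\<lambda>(p,i,k). rin a b cc d n i k p * norm (q (src n i k p))) summable_on Inner K c n"
    using Fn_expand_E by blast
  have "(\<lambda>(p,i,k). rin a b cc d n i k p * norm (q (src n i k p))) x = 0"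
  proof (rule nonneg_infsum_le_0D[OF _ s _ x])
    show "infsum (\<lambda>(p,i,k). rin a b cc d n i k p * norm (q (src n i k p))) (Inner K c n) \<le> 0"
      using F0 unfolding Fn_def by simp
  next
    fix y assume "y \<in> Inner K c n"
    then show "0 \<le> (\<lambda>(p,i,k). rin a b cc d n i k p * norm (q (src n i k p))) y"
      unfolding Inner_def using rterm_nonneg[OF rn rf q0 qs] by auto
  qed
  then show ?thesis using x' by simp
qed

end



lemma key:
  fixes c :: nat and K :: int and V :: "'v set"
    and a b cc d :: "int \<Rightarrow> nat \<Rightarrow> real"
    and Q :: "'v + (nat \<Rightarrow> nat) \<Rightarrow> 'v + (nat \<Rightarrow> nat) \<Rightarrow> real"
  assumes K_pos: "K \<ge> 1"
    and V_fin: "finite V"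
    and rates_nonneg: "\<forall>i\<in>{1..c}. \<forall>k\<le>K. a k i \<ge> 0 \<and> b k i \<ge> 0 \<and> cc k i \<ge> 0 \<and> d k i \<ge> 0"
    and rates_fin: "\<forall>i\<in>{1..c}. (\<lambda>k. a k i) summable_on {..K} \<and> (\<lambda>k. b k i) summable_on {..K}
                      \<and> (\<lambda>k. cc k i) summable_on {..K} \<and> (\<lambda>k. d k i) summable_on {..K}"
    and Q_nonneg: "\<forall>x\<in>Inl ` V \<union> Inr ` Wset c. \<forall>y\<in>Inl ` V \<union> Inr ` Wset c. x \<noteq> y \<longrightarrow> Q x y \<ge> 0"
    and Q_WW: "\<forall>n\<in>Wset c. \<forall>m\<in>Wset c. m \<noteq> n \<longrightarrow>
        Q (Inr n) (Inr m) =
          (\<Sum>i=1..c. \<Sum>k\<in>{- int (n 0)..K}. \<Sum>j\<in>{0,1}.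
             if (shift0 n k)(i := j) = m then jump_rate a b cc d n i k j else 0)"
    and Q_WV: "\<forall>n\<in>Wset c. (\<Sum>v\<in>V. Q (Inr n) (Inl v)) =
        (\<Sum>i=1..c. \<Sum>\<^sub>\<infinity>k\<in>{..- int (n 0) - 1}.
           (1 - real (n i)) * (a k i + b k i) + real (n i) * (cc k i + d k i))"
    and irr: "irreducible_ctmc (Inl ` V \<union> Inr ` Wset c) Q"
    and qS: "q \<in> abs_conv_solutions c K a b cc d"
    and zl: "\<forall>n\<in>Wset c. int (n 0) < K \<longrightarrow> q n = 0"
  shows "q = 0"
proof -
  have q0: "\<forall>n. n \<notin> Wset c \<longrightarrow> q n = 0" and qs: "(\<lambda>n. norm (q n)) summable_on Wset c"
    and ie: "\<forall>n\<in>Wset c. K \<le> int (n 0) \<longrightarrow> inner_eq c K a b cc d q n"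
    using qS unfolding abs_conv_solutions_def by auto
  note bal = balance[OF rates_nonneg rates_fin q0 qs K_pos ie zl]
  note pz = prop_zero[OF rates_nonneg rates_fin q0 qs K_pos ie zl]
  define S where "S = Inl ` V \<union> Inr ` Wset c"
  define qt where "qt x = (case x of Inl _ \<Rightarrow> 0 | Inr n \<Rightarrow> q n)" for x :: "'v + (nat \<Rightarrow> nat)"
  define E where "E = {(u, v). u \<in> S \<and> v \<in> S \<and> u \<noteq> v \<and> Q u v > 0}"
  have bk: "qt u = 0" if uv: "(u, v) \<in> E" and qv: "qt v = 0" for u v
  proof (cases u)
    case (Inl x) then show ?thesis by (simp add: qt_def)
  next
    case (Inr m)
    have m: "m \<in> Wset c" using uv Inr unfolding E_def S_def by auto
    show ?thesis
    proof (cases v)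
      case (Inl w)
      have w: "w \<in> V" using uv Inl unfolding E_def S_def by auto
      have pos: "Q (Inr m) (Inl w) > 0" using uv Inl Inr unfolding E_def by auto
      have "Q (Inr m) (Inl w) \<le> (\<Sum>v\<in>V. Q (Inr m) (Inl v))"
        by (rule member_le_sum[OF w _ V_fin]) (use Q_nonneg m in auto)
      then have "Vf c a b cc d m > 0" using pos Q_WV m unfolding Vf_def tr_def by auto
      moreover have "norm (q m) * Vf c a b cc d m = 0" using bal m by blast
      ultimately show ?thesis using Inr by (simp add: qt_def)
    next
      case Inr': (Inr n)
      have n: "n \<in> Wset c" and mn: "n \<noteq> m" and pos: "Q (Inr m) (Inr n) > 0"
        using uv Inr Inr' unfolding E_def S_def by auto
      have qn: "q n = 0" using qv Inr' by (simp add: qt_def)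
      have "(\<Sum>i=1..c. \<Sum>k\<in>{- int (m 0)..K}. \<Sum>j\<in>{0,1}.
             if (shift0 m k)(i := j) = n then jump_rate a b cc d m i k j else 0) \<noteq> 0"
        using pos Q_WW m n mn by auto
      then obtain i where i: "i \<in> {1..c}" and
        "(\<Sum>k\<in>{- int (m 0)..K}. \<Sum>j\<in>{0,1}.
             if (shift0 m k)(i := j) = n then jump_rate a b cc d m i k j else 0) \<noteq> 0"
        using sum.not_neutral_contains_not_neutral by blast
      then obtain k where k: "k \<in> {- int (m 0)..K}" and
        "(\<Sum>j\<in>{0,1}. if (shift0 m k)(i := j) = n then jump_rate a b cc d m i k j else 0) \<noteq> 0"
        using sum.not_neutral_contains_not_neutral by blast
      then obtain j where j: "j \<in> {0,1}" and
        "(if (shift0 m k)(i := j) = n then jump_rate a b cc d m i k j else 0) \<noteq> 0"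
        using sum.not_neutral_contains_not_neutral by blast
      then have tgt: "(shift0 m k)(i := j) = n" and jr: "jump_rate a b cc d m i k j \<noteq> 0"
        by (auto split: if_splits)
      have i0: "i \<noteq> 0" using i by auto
      have n0: "int (n 0) = int (m 0) + k" using tgt[symmetric] i0 k by (simp add: shift0_def)
      have ni: "n i = j" using tgt[symmetric] by simp
      have srcm: "src n i k (m i) = m"
        using tgt[symmetric] i0 k by (auto simp: fun_eq_iff src_def shift0_def)
      have mi: "m i \<in> {0,1}" using W_bin[OF m i] by auto
      have x: "(m i, i, k) \<in> Inner K c n" unfolding Inner_def using mi i k n0 by auto
      have "rin a b cc d n i k (m i) * norm (q (src n i k (m i))) = 0"
        by (rule pz[OF n qn x refl])
      then have "jump_rate a b cc d m i k j * norm (q m) = 0"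
        by (simp add: rin_def srcm ni)
      then show ?thesis using jr Inr by (simp add: qt_def)
    qed
  qed
  define y0 where "y0 = (Inr (\<lambda>_. 0) :: 'v + (nat \<Rightarrow> nat))"
  have z0: "(\<lambda>_. 0::nat) \<in> Wset c" unfolding Wset_def by auto
  have y0S: "y0 \<in> S" unfolding y0_def S_def using z0 by auto
  have qy0: "qt y0 = 0" unfolding y0_def qt_def using zl z0 K_pos by auto
  have allz: "qt x = 0" if "x \<in> S" for x
  proof -
    have "(x, y0) \<in> E\<^sup>*" using irr that y0S unfolding irreducible_ctmc_def E_def S_def by blast
    then show ?thesis
    proof (induction rule: converse_rtrancl_induct)
      case base show ?case by (rule qy0)
    next
      case (step y z) then show ?case using bk by blast
    qed
  qed
  show ?thesis
  proof
    fix n show "q n = 0 n"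
    proof (cases "n \<in> Wset c")
      case True then show ?thesis using allz[of "Inr n"] unfolding S_def qt_def by auto
    next
      case False then show ?thesis using q0 by simp
    qed
  qed
qed




lemma cscale_vs: "vector_space (cscale :: complex \<Rightarrow> ('a \<Rightarrow> complex) \<Rightarrow> ('a \<Rightarrow> complex))"
  by unfold_locales (auto simp: cscale_def fun_eq_iff algebra_simps)

context
  fixes c :: nat and K :: int and a b cc d :: "int \<Rightarrow> nat \<Rightarrow> real"
  assumes rn: "\<forall>i\<in>{1..c}. \<forall>k\<le>K. a k i \<ge> 0 \<and> b k i \<ge> 0 \<and> cc k i \<ge> 0 \<and> d k i \<ge> 0"
    and rf: "\<forall>i\<in>{1..c}. (\<lambda>k. a k i) summable_on {..K} \<and> (\<lambda>k. b k i) summable_on {..K}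
                      \<and> (\<lambda>k. cc k i) summable_on {..K} \<and> (\<lambda>k. d k i) summable_on {..K}"
begin

lemma inner_eq_iff: assumes n: "n \<in> Wset c"
  shows "inner_eq c K a b cc d q n \<longleftrightarrow>
    complex_of_real (Tt c K a b cc d n) * q n = (\<Sum>i=1..c. \<Sum>\<^sub>\<infinity>k\<in>{..K}. gterm a b cc d q n i k)"
proof -
  have "(\<Sum>\<^sub>\<infinity>k\<in>{..K}. complex_of_real (tr a b cc d n i k) * q n) =
         complex_of_real (\<Sum>\<^sub>\<infinity>k\<in>{..K}. tr a b cc d n i k) * q n" if "i \<in> {1..c}" for i
  proof -
    have e: "(\<Sum>\<^sub>\<infinity>k\<in>{..K}. complex_of_real (tr a b cc d n i k)) = complex_of_real (\<Sum>\<^sub>\<infinity>k\<in>{..K}. tr a b cc d n i k)"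
      by (rule infsumI[OF has_sum_of_real[OF has_sum_infsum[OF tr_summable[OF rn rf n that order_refl]]]])
    show ?thesis by (simp add: infsum_cmult_left' e)
  qed
  then have L: "(\<Sum>i=1..c. \<Sum>\<^sub>\<infinity>k\<in>{..K}. complex_of_real (tr a b cc d n i k) * q n)
        = complex_of_real (Tt c K a b cc d n) * q n"
    by (simp add: Tt_def sum_distrib_right)
  show ?thesis unfolding inner_eq_alt L ..
qed

lemma sol_subspace: "module.subspace cscale (abs_conv_solutions c K a b cc d)"
proof -
  interpret V: vector_space "cscale :: complex \<Rightarrow> ((nat \<Rightarrow> nat) \<Rightarrow> complex) \<Rightarrow> _" by (rule cscale_vs)
  show ?thesis
  proof (rule V.subspaceI)
    show "0 \<in> abs_conv_solutions c K a b cc d"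
      unfolding abs_conv_solutions_def inner_eq_def by simp
  next
    fix x y assume x: "x \<in> abs_conv_solutions c K a b cc d" and y: "y \<in> abs_conv_solutions c K a b cc d"
    have x0: "\<forall>n. n \<notin> Wset c \<longrightarrow> x n = 0" and xs: "(\<lambda>n. norm (x n)) summable_on Wset c"
      and xi: "\<forall>n\<in>Wset c. K \<le> int (n 0) \<longrightarrow> inner_eq c K a b cc d x n"
      using x unfolding abs_conv_solutions_def by auto
    have y0: "\<forall>n. n \<notin> Wset c \<longrightarrow> y n = 0" and ys: "(\<lambda>n. norm (y n)) summable_on Wset c"
      and yi: "\<forall>n\<in>Wset c. K \<le> int (n 0) \<longrightarrow> inner_eq c K a b cc d y n"
      using y unfolding abs_conv_solutions_def by auto
    have s: "(\<lambda>n. norm ((x + y) n)) summable_on Wset c"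
      by (rule summable_on_comparison_test[OF summable_on_add[OF xs ys]]) (auto intro: norm_triangle_ineq)
    have g: "gterm a b cc d (x + y) n i k = gterm a b cc d x n i k + gterm a b cc d y n i k" for n i k
      by (simp add: gterm_def algebra_simps)
    have ie: "inner_eq c K a b cc d (x + y) n" if n: "n \<in> Wset c" "K \<le> int (n 0)" for n
    proof -
      have "(\<Sum>i=1..c. \<Sum>\<^sub>\<infinity>k\<in>{..K}. gterm a b cc d (x + y) n i k) =
            (\<Sum>i=1..c. \<Sum>\<^sub>\<infinity>k\<in>{..K}. gterm a b cc d x n i k) + (\<Sum>i=1..c. \<Sum>\<^sub>\<infinity>k\<in>{..K}. gterm a b cc d y n i k)"
        unfolding g sum.distrib[symmetric]
        by (intro sum.cong refl infsum_add gterm_summable[OF rn rf x0 xs n(1)] gterm_summable[OF rn rf y0 ys n(1)]) auto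
      moreover have "complex_of_real (Tt c K a b cc d n) * x n = (\<Sum>i=1..c. \<Sum>\<^sub>\<infinity>k\<in>{..K}. gterm a b cc d x n i k)"
        using xi n inner_eq_iff[OF n(1), of x] by auto
      moreover have "complex_of_real (Tt c K a b cc d n) * y n = (\<Sum>i=1..c. \<Sum>\<^sub>\<infinity>k\<in>{..K}. gterm a b cc d y n i k)"
        using yi n inner_eq_iff[OF n(1), of y] by auto
      ultimately show ?thesis unfolding inner_eq_iff[OF n(1)] by (simp add: distrib_left)
    qed
    show "x + y \<in> abs_conv_solutions c K a b cc d"
      unfolding abs_conv_solutions_def using x0 y0 s ie by auto
  next
    fix z :: complex and x assume x: "x \<in> abs_conv_solutions c K a b cc d"
    have x0: "\<forall>n. n \<notin> Wset c \<longrightarrow> x n = 0" and xs: "(\<lambda>n. norm (x n)) summable_on Wset c"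
      and xi: "\<forall>n\<in>Wset c. K \<le> int (n 0) \<longrightarrow> inner_eq c K a b cc d x n"
      using x unfolding abs_conv_solutions_def by auto
    have s: "(\<lambda>n. norm (cscale z x n)) summable_on Wset c"
      using summable_on_cmult_right[OF xs, of "norm z"] by (simp add: cscale_def norm_mult)
    have g: "gterm a b cc d (cscale z x) n i k = z * gterm a b cc d x n i k" for n i k
      by (simp add: gterm_def cscale_def algebra_simps)
    have ie: "inner_eq c K a b cc d (cscale z x) n" if n: "n \<in> Wset c" "K \<le> int (n 0)" for n
    proof -
      have "(\<Sum>i=1..c. \<Sum>\<^sub>\<infinity>k\<in>{..K}. gterm a b cc d (cscale z x) n i k) =
            z * (\<Sum>i=1..c. \<Sum>\<^sub>\<infinity>k\<in>{..K}. gterm a b cc d x n i k)"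
        unfolding g by (simp add: infsum_cmult_right' sum_distrib_left)
      moreover have "complex_of_real (Tt c K a b cc d n) * x n = (\<Sum>i=1..c. \<Sum>\<^sub>\<infinity>k\<in>{..K}. gterm a b cc d x n i k)"
        using xi n inner_eq_iff[OF n(1), of x] by auto
      ultimately show ?thesis unfolding inner_eq_iff[OF n(1)] by (simp add: cscale_def mult.left_commute)
    qed
    show "cscale z x \<in> abs_conv_solutions c K a b cc d"
      unfolding abs_conv_solutions_def using x0 s ie by (auto simp: cscale_def)
  qed
qed

end

lemma card_low: "finite {n \<in> Wset c. int (n 0) < K} \<and> card {n \<in> Wset c. int (n 0) < K} \<le> 2 ^ c * nat K"
proof -
  let ?f = "\<lambda>(m::nat, T::nat set). (\<lambda>i. if i = 0 then m else if i \<in> T then 1 else 0)"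
  have sub: "{n \<in> Wset c. int (n 0) < K} \<subseteq> ?f ` ({..<nat K} \<times> Pow {1..c})"
  proof
    fix n assume n: "n \<in> {n \<in> Wset c. int (n 0) < K}"
    have "n = ?f (n 0, {i\<in>{1..c}. n i = 1})"
    proof
      fix i show "n i = ?f (n 0, {i\<in>{1..c}. n i = 1}) i"
        using n W_bin[of n c i] unfolding Wset_def by (cases "i = 0") (auto, force)
    qed
    moreover have "(n 0, {i\<in>{1..c}. n i = 1}) \<in> {..<nat K} \<times> Pow {1..c}" using n by auto
    ultimately show "n \<in> ?f ` ({..<nat K} \<times> Pow {1..c})" by blast
  qed
  have "card {n \<in> Wset c. int (n 0) < K} \<le> card (?f ` ({..<nat K} \<times> Pow {1..c}))"
    by (rule card_mono[OF _ sub]) auto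
  also have "\<dots> \<le> card ({..<nat K} \<times> Pow {1..c})" by (rule card_image_le) auto
  also have "\<dots> = 2 ^ c * nat K" by (simp add: card_cartesian_product card_Pow)
  finally show ?thesis using finite_subset[OF sub] by auto
qed

lemma sum_fun_apply: "(\<Sum>a\<in>A. g a) x = (\<Sum>a\<in>A. g a x)"
  by (induct A rule: infinite_finite_induct) auto




theorem corollary1:
  fixes c :: nat and K :: int and V :: "'v set"
    and a b cc d :: "int \<Rightarrow> nat \<Rightarrow> real"
    and Q :: "'v + (nat \<Rightarrow> nat) \<Rightarrow> 'v + (nat \<Rightarrow> nat) \<Rightarrow> real"
  assumes c_pos: "c \<ge> 1" and K_pos: "K \<ge> 1"
    and V_fin: "finite V"
    and rates_nonneg: "\<forall>i\<in>{1..c}. \<forall>k\<le>K. a k i \<ge> 0 \<and> b k i \<ge> 0 \<and> cc k i \<ge> 0 \<and> d k i \<ge> 0"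
    and rates_fin: "\<forall>i\<in>{1..c}. (\<lambda>k. a k i) summable_on {..K} \<and> (\<lambda>k. b k i) summable_on {..K}
                      \<and> (\<lambda>k. cc k i) summable_on {..K} \<and> (\<lambda>k. d k i) summable_on {..K}"
    and Q_nonneg: "\<forall>x\<in>Inl ` V \<union> Inr ` Wset c. \<forall>y\<in>Inl ` V \<union> Inr ` Wset c. x \<noteq> y \<longrightarrow> Q x y \<ge> 0"
    and Q_WW: "\<forall>n\<in>Wset c. \<forall>m\<in>Wset c. m \<noteq> n \<longrightarrow>
        Q (Inr n) (Inr m) =
          (\<Sum>i=1..c. \<Sum>k\<in>{- int (n 0)..K}. \<Sum>j\<in>{0,1}.
             if (shift0 n k)(i := j) = m then jump_rate a b cc d n i k j else 0)"
    and Q_WV: "\<forall>n\<in>Wset c. (\<Sum>v\<in>V. Q (Inr n) (Inl v)) =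
        (\<Sum>i=1..c. \<Sum>\<^sub>\<infinity>k\<in>{..- int (n 0) - 1}.
           (1 - real (n i)) * (a k i + b k i) + real (n i) * (cc k i + d k i))"
    and Q_VW: "\<forall>v\<in>V. \<forall>m\<in>Wset c. int (m 0) \<ge> K \<longrightarrow> Q (Inl v) (Inr m) = 0"
    and Q_V_fin: "\<forall>v\<in>V. (\<lambda>y. Q (Inl v) y) summable_on (Inl ` V \<union> Inr ` Wset c - {Inl v})"
    and ergodic: "ergodic_ctmc (Inl ` V \<union> Inr ` Wset c) Q"
  shows "\<forall>B \<subseteq> abs_conv_solutions c K a b cc d.
           \<not> module.dependent cscale B \<longrightarrow> finite B \<and> card B \<le> 2 ^ c * nat K"
proof (intro allI impI)
  fix B assume BS: "B \<subseteq> abs_conv_solutions c K a b cc d" and ind: "\<not> module.dependent cscale B"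
  interpret V: vector_space "cscale :: complex \<Rightarrow> ((nat \<Rightarrow> nat) \<Rightarrow> complex) \<Rightarrow> _" by (rule cscale_vs)
  define F where "F = {n \<in> Wset c. int (n 0) < K}"
  define R where "R q = (\<lambda>n. if n \<in> F then q n else (0::complex))" for q :: "(nat \<Rightarrow> nat) \<Rightarrow> complex"
  interpret H: module_hom "cscale :: complex \<Rightarrow> ((nat \<Rightarrow> nat) \<Rightarrow> complex) \<Rightarrow> _" cscale R
    by unfold_locales (auto simp: R_def cscale_def fun_eq_iff algebra_simps)
  have irr: "irreducible_ctmc (Inl ` V \<union> Inr ` Wset c) Q"
    using ergodic unfolding ergodic_ctmc_def by blast
  have spanS: "V.span B \<subseteq> abs_conv_solutions c K a b cc d"
    by (rule V.span_minimal[OF BS sol_subspace[OF rates_nonneg rates_fin]])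
  have inj: "inj_on R (V.span B)"
  proof (rule inj_onI)
    fix x y assume x: "x \<in> V.span B" and y: "y \<in> V.span B" and e: "R x = R y"
    have dS: "x - y \<in> abs_conv_solutions c K a b cc d" using V.span_diff[OF x y] spanS by blast
    have "\<forall>n\<in>Wset c. int (n 0) < K \<longrightarrow> (x - y) n = 0"
    proof (intro ballI impI)
      fix n assume "n \<in> Wset c" "int (n 0) < K"
      then have "n \<in> F" unfolding F_def by auto
      then show "(x - y) n = 0" using fun_cong[OF e, of n] unfolding R_def by simp
    qed
    then have "x - y = 0"
      by (rule key[OF K_pos V_fin rates_nonneg rates_fin Q_nonneg Q_WW Q_WV irr dS])
    then show "x = y" by simp
  qed
  have indR: "\<not> module.dependent cscale (R ` B)"
    by (rule H.independent_injective_image[OF ind inj])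
  have injB: "inj_on R B" using inj_on_subset[OF inj V.span_superset] .
  define E where "E = (\<lambda>f. (\<lambda>n. if n = f then (1::complex) else 0)) ` F"
  have finF: "finite F" and cardF: "card F \<le> 2 ^ c * nat K" using card_low[of c K] unfolding F_def by auto
  have finE: "finite E" unfolding E_def using finF by simp
  have RE: "R ` B \<subseteq> V.span E"
  proof
    fix r assume "r \<in> R ` B"
    then obtain q where r: "r = R q" by blast
    have "R q = (\<Sum>f\<in>F. cscale (q f) (\<lambda>n. if n = f then (1::complex) else 0))"
    proof
      fix n
      have "(\<Sum>f\<in>F. cscale (q f) (\<lambda>n. if n = f then (1::complex) else 0)) n
          = (\<Sum>f\<in>F. if f = n then q f else 0)"
        unfolding sum_fun_apply by (intro sum.cong refl) (auto simp: cscale_def)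
      also have "\<dots> = R q n" unfolding R_def by (simp add: sum.delta[OF finF])
      finally show "R q n = (\<Sum>f\<in>F. cscale (q f) (\<lambda>n. if n = f then (1::complex) else 0)) n" by simp
    qed
    also have "\<dots> \<in> V.span E"
      by (intro V.span_sum V.span_scale V.span_base) (auto simp: E_def)
    finally show "r \<in> V.span E" using r by simp
  qed
  have b: "finite (R ` B) \<and> card (R ` B) \<le> card E"
    by (rule V.independent_span_bound[OF finE indR RE])
  have "card E \<le> card F" unfolding E_def by (rule card_image_le[OF finF])
  then show "finite B \<and> card B \<le> 2 ^ c * nat K"
    using b finite_image_iff[OF injB] card_image[OF injB] cardF by auto
qed



end
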